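(* Let $R$ be a semisimple ring and $(a,b)\in R^2$. Then the cyclic submodule $R(a,b)$ is free if and only if $(a,b)$ is admissible.
   Context: All rings are associative with identity $1\neq0$. $R^2$ is the free left $R$-module of pairs; $R(a,b)=\{(\alpha a,\alpha b):\alpha\in R\}$ is free if $r(a,b)=(0,0)$ implies $r=0$. A pair $(a,b)$ is admissible if there exist $c,d\in R$ such that $\begin{pmatrix}a&b\\c&d\end{pmatrix}\in GL_2(R)$. *)

theory Defs
  imports Main
begin

definition left_ideal :: "'a::ring_1 set \<Rightarrow> bool" where
  "left_ideal I \<longleftrightarrow> 0 \<in> I \<and> (\<forall>x\<in>I. \<forall>y\<in>I. x + y \<in> I) \<and> (\<forall>r x. x \<in> I \<longrightarrow> r * x \<in> I)"

text \<open>R is (left) semisimple: the left regular module R is semisimple, i.e. every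
left ideal is a direct summand of R.\<close>
definition semisimple_ring :: "'a::ring_1 itself \<Rightarrow> bool" where
  "semisimple_ring _ \<longleftrightarrow>
     (\<forall>I::'a set. left_ideal I \<longrightarrow>
        (\<exists>J. left_ideal J \<and> I \<inter> J = {0} \<and> (\<forall>x. \<exists>i\<in>I. \<exists>j\<in>J. x = i + j)))"

text \<open>The 2x2 matrix with rows (a,b),(c,d) lies in GL_2(R): it has a two-sided inverse.\<close>
definition in_GL2 :: "'a::ring_1 \<Rightarrow> 'a \<Rightarrow> 'a \<Rightarrow> 'a \<Rightarrow> bool" where
  "in_GL2 a b c d \<longleftrightarrow> (\<exists>e f g h.
      a*e + b*g = 1 \<and> a*f + b*h = 0 \<and> c*e + d*g = 0 \<and> c*f + d*h = 1 \<and>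
      e*a + f*c = 1 \<and> e*b + f*d = 0 \<and> g*a + h*c = 0 \<and> g*b + h*d = 1)"

definition admissible :: "'a::ring_1 \<Rightarrow> 'a \<Rightarrow> bool" where
  "admissible a b \<longleftrightarrow> (\<exists>c d. in_GL2 a b c d)"

definition cyclic_free :: "'a::ring_1 \<Rightarrow> 'a \<Rightarrow> bool" where
  "cyclic_free a b \<longleftrightarrow> (\<forall>r. r * a = 0 \<and> r * b = 0 \<longrightarrow> r = 0)"

end

theory Submission
  imports Defs
begin


lemma li_minus: "left_ideal I \<Longrightarrow> x \<in> I \<Longrightarrow> y \<in> I \<Longrightarrow> x - y \<in> I"
proof -
  assume I: "left_ideal I" and x: "x \<in> I" and y: "y \<in> I"
  have "(-1) * y \<in> I" using I y unfolding left_ideal_def by blast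
  hence "x + (-1)*y \<in> I" using I x unfolding left_ideal_def by blast
  thus ?thesis by simp
qed

lemma li_mult: "left_ideal I \<Longrightarrow> x \<in> I \<Longrightarrow> r * x \<in> I"
  unfolding left_ideal_def by blast

lemma li_add: "left_ideal I \<Longrightarrow> x \<in> I \<Longrightarrow> y \<in> I \<Longrightarrow> x + y \<in> I"
  unfolding left_ideal_def by blast

lemma li_zero: "left_ideal I \<Longrightarrow> 0 \<in> I"
  unfolding left_ideal_def by blast

lemma li_idem:
  fixes I :: "'a::ring_1 set"
  assumes ss: "semisimple_ring TYPE('a)" and I: "left_ideal I"
  shows "\<exists>e\<in>I. \<forall>x\<in>I. x*e = x"
proof -
  obtain J where J: "left_ideal J" "I \<inter> J = {0}" "\<forall>x. \<exists>i\<in>I. \<exists>j\<in>J. x = i + j"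
    using ss[unfolded semisimple_ring_def, rule_format, OF I] by (elim exE conjE) (rule that)
  obtain e j where ej: "e \<in> I" "j \<in> J" "1 = e + j" using J(3) by blast
  have "\<forall>x\<in>I. x*e = x"
  proof
    fix x assume x: "x \<in> I"
    have "x = x*(e+j)" using ej(3) by simp
    hence "x = x*e + x*j" by (simp add: distrib_left)
    hence xj: "x*j = x - x*e" by (simp add: algebra_simps)
    have "x*j \<in> J" using J(1) ej(2) by (rule li_mult)
    moreover have "x - x*e \<in> I" using I x li_mult[OF I ej(1)] li_minus by blast
    ultimately have "x*j \<in> I \<inter> J" using xj by simp
    hence "x*j = 0" using J(2) by blast
    thus "x*e = x" using xj by simp
  qed
  thus ?thesis using ej(1) by blast
qed

definition accrel :: "('a::ring_1 set \<times> 'a set) set" where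
  "accrel = {(B,A). A \<subset> B \<and> left_ideal A \<and> left_ideal B}"

lemma wf_accrel:
  assumes ss: "semisimple_ring TYPE('a::ring_1)"
  shows "wf (accrel :: ('a set \<times> 'a set) set)"
  unfolding wf_iff_no_infinite_down_chain
proof
  assume "\<exists>f. \<forall>i. (f (Suc i), f i) \<in> (accrel :: ('a set \<times> 'a set) set)"
  then obtain f :: "nat \<Rightarrow> 'a set" where fa: "\<forall>i. (f (Suc i), f i) \<in> (accrel :: ('a set \<times> 'a set) set)"
    by (elim exE)
  have f: "\<And>i. f i \<subset> f (Suc i)" "\<And>i. left_ideal (f i)"
    using fa unfolding accrel_def by auto
  have sm: "\<And>n. f n \<le> f (Suc n)" using f(1) by (simp add: less_imp_le)
  have mono: "\<And>i j. i \<le> j \<Longrightarrow> f i \<subseteq> f j"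
    using lift_Suc_mono_le[of f, OF sm] by simp
  define U where "U = \<Union>(range f)"
  have U: "left_ideal U"
    unfolding left_ideal_def
  proof (intro conjI ballI allI impI)
    show "0 \<in> U" unfolding U_def using li_zero[OF f(2)] by blast
  next
    fix x y assume "x \<in> U" "y \<in> U"
    then obtain i j where "x \<in> f i" "y \<in> f j" unfolding U_def by blast
    hence "x \<in> f (max i j)" "y \<in> f (max i j)"
      using subsetD[OF mono[OF max.cobounded1[of i j]]] subsetD[OF mono[OF max.cobounded2[of j i]]] by auto
    thus "x + y \<in> U" unfolding U_def using li_add[OF f(2)] by blast
  next
    fix r x assume "x \<in> U"
    then obtain i where "x \<in> f i" unfolding U_def by blast
    thus "r * x \<in> U" unfolding U_def using li_mult[OF f(2)] by blast
  qed
  obtain J where J: "left_ideal J" "U \<inter> J = {0}" "\<forall>x. \<exists>i\<in>U. \<exists>j\<in>J. x = i + j"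
    using ss[unfolded semisimple_ring_def, rule_format, OF U] by (elim exE conjE) (rule that)
  obtain u j where uj: "u \<in> U" "j \<in> J" "1 = u + j" using J(3) by blast
  obtain N where uN: "u \<in> f N" using uj(1) unfolding U_def by blast
  obtain z where z: "z \<in> f (Suc N)" "z \<notin> f N" using f(1)[of N] by blast
  have "z = z*(u+j)" using uj(3) by simp
  hence "z = z*u + z*j" by (simp add: distrib_left)
  hence zj: "z*j = z - z*u" by (simp add: algebra_simps)
  have zu: "z*u \<in> f N" using li_mult[OF f(2) uN] .
  have "z - z*u \<in> f (Suc N)" using li_minus[OF f(2) z(1)] zu f(1)[of N] by blast
  hence "z - z*u \<in> U" unfolding U_def by blast
  moreover have "z*j \<in> J" using li_mult[OF J(1) uj(2)] .
  ultimately have "z*j \<in> U \<inter> J" using zj by simp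
  hence "z*j = 0" using J(2) by blast
  hence "z = z*u" using zj by simp
  thus False using zu z(2) by simp
qed



definition odec :: "'a::ring_1 \<Rightarrow> 'a \<Rightarrow> 'a \<Rightarrow> bool" where
  "odec h p q \<longleftrightarrow> p*p = p \<and> q*q = q \<and> p*q = 0 \<and> q*p = 0 \<and> h = p + q"
definition iso :: "'a::ring_1 \<Rightarrow> 'a \<Rightarrow> bool" where
  "iso p p' \<longleftrightarrow> (\<exists>X Y. X = p*X*p' \<and> Y = p'*Y*p \<and> X*Y = p \<and> Y*X = p')"
definition minimal :: "'a::ring_1 \<Rightarrow> bool" where
  "minimal p \<longleftrightarrow> p \<noteq> 0 \<and> (\<forall>t. t*p = t \<longrightarrow> t = 0 \<or> (\<exists>s. s*t = p))"

lemma iso_refl: "(p::'a::ring_1)*p = p \<Longrightarrow> iso p p"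
  unfolding iso_def by (rule exI[of _ p], rule exI[of _ p]) (simp add: mult.assoc)

lemma iso_sym: "iso p q \<Longrightarrow> iso q p"
  unfolding iso_def by blast

lemma corner:
  fixes X p q :: "'a::ring_1"
  assumes X: "X = p*X*q" and pp: "p*p = p" and qq: "q*q = q"
  shows "p*X = X \<and> X*q = X"
proof
  have "p*X = p*(p*X*q)" using arg_cong[OF X, of "\<lambda>z. p*z"] .
  also have "\<dots> = (p*p)*X*q" by (simp add: mult.assoc)
  also have "\<dots> = X" using pp X by simp
  finally show "p*X = X" .
  have "X*q = (p*X*q)*q" using arg_cong[OF X, of "\<lambda>z. z*q"] .
  also have "\<dots> = p*X*(q*q)" by (simp add: mult.assoc)
  also have "\<dots> = X" using qq X by simp
  finally show "X*q = X" .
qed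

lemma iso_trans:
  fixes p q r :: "'a::ring_1"
  assumes "p*p = p" "q*q = q" "r*r = r" "iso p q" "iso q r"
  shows "iso p r"
proof -
  obtain X1 Y1 where 1: "X1 = p*X1*q" "Y1 = q*Y1*p" "X1*Y1 = p" "Y1*X1 = q" using assms(4) unfolding iso_def by blast
  obtain X2 Y2 where 2: "X2 = q*X2*r" "Y2 = r*Y2*q" "X2*Y2 = q" "Y2*X2 = r" using assms(5) unfolding iso_def by blast
  have a: "p*X1 = X1" "X1*q = X1" using corner[OF 1(1)] assms by auto
  have b: "q*Y1 = Y1" "Y1*p = Y1" using corner[OF 1(2)] assms by auto
  have c: "q*X2 = X2" "X2*r = X2" using corner[OF 2(1)] assms by auto
  have d: "r*Y2 = Y2" "Y2*q = Y2" using corner[OF 2(2)] assms by auto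
  show ?thesis unfolding iso_def
  proof (intro exI conjI)
    show "X1*X2 = p*(X1*X2)*r" using a c by (metis mult.assoc)
    show "Y2*Y1 = r*(Y2*Y1)*p" using b d by (metis mult.assoc)
    have "X1*X2*(Y2*Y1) = X1*(X2*Y2)*Y1" by (simp add: mult.assoc)
    thus "X1*X2*(Y2*Y1) = p" using 2(3) a(2) 1(3) by simp
    have "Y2*Y1*(X1*X2) = Y2*(Y1*X1)*X2" by (simp add: mult.assoc)
    thus "Y2*Y1*(X1*X2) = r" using 1(4) d(2) 2(4) by simp
  qed
qed

lemma iso_zero: "iso (0::'a::ring_1) p \<Longrightarrow> p = 0"
proof -
  assume "iso (0::'a) p"
  then obtain X Y :: 'a where "X = 0*X*p" "Y*X = p" unfolding iso_def by blast
  thus "p = 0" by simp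
qed

lemma iso_same:
  fixes p p' :: "'a::ring_1"
  assumes "p*p = p" "p'*p' = p'" "p*p' = p" "p'*p = p'"
  shows "iso p p'"
  unfolding iso_def
  by (rule exI[of _ p], rule exI[of _ p']) (simp add: assms mult.assoc)

lemma expand3: "((a::'a::ring_1)+b)*(c+d)*(e+f) = a*c*e + a*c*f + a*d*e + a*d*f + b*c*e + b*c*f + b*d*e + b*d*f"
  by (simp add: algebra_simps)

lemma iso_add:
  fixes p p2 k :: "'a::ring_1"
  assumes "p*p = p" "p2*p2 = p2" "k*k = k" "iso p p2" "p*k = 0" "k*p = 0" "p2*k = 0" "k*p2 = 0"
  shows "iso (p+k) (p2+k)"
proof -
  obtain X Y where 1: "X = p*X*p2" "Y = p2*Y*p" "X*Y = p" "Y*X = p2" using assms(4) unfolding iso_def by blast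
  have a: "p*X = X" "X*p2 = X" using corner[OF 1(1)] assms by auto
  have b: "p2*Y = Y" "Y*p = Y" using corner[OF 1(2)] assms by auto
  have Xk: "X*k = 0" by (metis a(2) assms(7) mult.assoc mult_zero_right)
  have kX: "k*X = 0" by (metis a(1) assms(6) mult.assoc mult_zero_left)
  have Yk: "Y*k = 0" by (metis b(2) assms(5) mult.assoc mult_zero_right)
  have kY: "k*Y = 0" by (metis b(1) assms(8) mult.assoc mult_zero_left)
  show ?thesis unfolding iso_def
  proof (intro exI conjI)
    have "(p+k)*(X+k)*(p2+k) = p*X*p2 + p*X*k + p*k*p2 + p*k*k + k*X*p2 + k*X*k + k*k*p2 + k*k*k"
      by (rule expand3)
    also have "\<dots> = X + k" using a Xk kX assms(3,5,8) by simp
    finally show "X+k = (p+k)*(X+k)*(p2+k)" by simp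
    have "(p2+k)*(Y+k)*(p+k) = p2*Y*p + p2*Y*k + p2*k*p + p2*k*k + k*Y*p + k*Y*k + k*k*p + k*k*k"
      by (rule expand3)
    also have "\<dots> = Y + k" using b Yk kY assms(3,6,7) by simp
    finally show "Y+k = (p2+k)*(Y+k)*(p+k)" by simp
    show "(X+k)*(Y+k) = p+k" by (simp add: distrib_left distrib_right Xk kY 1(3) assms(3,5,8))
    show "(Y+k)*(X+k) = p2+k" by (simp add: distrib_left distrib_right Yk kX 1(4) assms(3,6,7))
  qed
qed

lemma iso_compl:
  fixes h d d' c1 c2 :: "'a::ring_1"
  assumes "odec h d c1" "odec h d' c2" "d*d' = d" "d'*d = d'"
  shows "iso c1 c2"
proof -
  have A: "d*d = d" "c1*c1 = c1" "d*c1 = 0" "c1*d = 0" "h = d + c1"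
   and B: "d'*d' = d'" "c2*c2 = c2" "d'*c2 = 0" "c2*d' = 0" "h = d' + c2"
    using assms unfolding odec_def by auto
  have c1h: "c1*h = c1" "h*c1 = c1" using A by (simp_all add: algebra_simps)
  have c2h: "c2*h = c2" "h*c2 = c2" using B by (simp_all add: algebra_simps)
  have e1: "c1*d'*c1 = 0"
  proof -
    have "c1*d'*c1 = c1*(d'*d)*c1" using assms(4) by simp
    also have "\<dots> = c1*d'*(d*c1)" by (simp add: mult.assoc)
    finally show ?thesis using A(3) by simp
  qed
  have e2: "c2*d*c2 = 0"
  proof -
    have "c2*d*c2 = c2*(d*d')*c2" using assms(3) by simp
    also have "\<dots> = c2*d*(d'*c2)" by (simp add: mult.assoc)
    finally show ?thesis using B(3) by simp
  qed
  have f1: "c1*c2*c1 = c1"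
  proof -
    have "c1 = c1*h*c1" using c1h A(2) by (metis mult.assoc)
    also have "\<dots> = c1*d'*c1 + c1*c2*c1" using B(5) by (simp add: algebra_simps)
    finally show ?thesis using e1 by simp
  qed
  have f2: "c2*c1*c2 = c2"
  proof -
    have "c2 = c2*h*c2" using c2h B(2) by (metis mult.assoc)
    also have "\<dots> = c2*d*c2 + c2*c1*c2" using A(5) by (simp add: algebra_simps)
    finally show ?thesis using e2 by simp
  qed
  show ?thesis unfolding iso_def
  proof (intro exI conjI)
    show "c1*c2 = c1*(c1*c2)*c2" using A(2) B(2) by (metis mult.assoc)
    show "c2*c1 = c2*(c2*c1)*c1" using A(2) B(2) by (metis mult.assoc)
    show "c1*c2*(c2*c1) = c1" using f1 B(2) by (metis mult.assoc)
    show "c2*c1*(c1*c2) = c2" using f2 A(2) by (metis mult.assoc)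
  qed
qed

lemma min_iso:
  fixes p p' :: "'a::ring_1"
  assumes "p*p = p" "p'*p' = p'" "minimal p" "iso p p'"
  shows "minimal p'"
proof -
  obtain X Y where 1: "X = p*X*p'" "Y = p'*Y*p" "X*Y = p" "Y*X = p'" using assms(4) unfolding iso_def by blast
  have a: "p*X = X" "X*p' = X" using corner[OF 1(1)] assms by auto
  have b: "p'*Y = Y" "Y*p = Y" using corner[OF 1(2)] assms by auto
  have nz: "p' \<noteq> 0" using assms(3) 1 unfolding minimal_def by (metis mult_zero_left mult_zero_right)
  show ?thesis unfolding minimal_def
  proof (intro conjI allI impI nz)
    fix t assume t: "t*p' = t"
    show "t = 0 \<or> (\<exists>s. s*t = p')"
    proof (cases "t = 0")
      case False
      have "t*Y*p = t*Y" using b by (metis mult.assoc)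
      moreover have "t*Y \<noteq> 0"
      proof
        assume "t*Y = 0"
        hence "t*Y*X = 0" by simp
        hence "t*p' = 0" using 1(4) by (metis mult.assoc)
        thus False using t False by simp
      qed
      ultimately obtain s where "s*(t*Y) = p" using assms(3) unfolding minimal_def by blast
      moreover have "Y*s*t*(Y*X) = Y*(s*(t*Y))*X" by (simp add: mult.assoc)
      ultimately have e1: "Y*s*t*(Y*X) = Y*p*X" by simp
      have e2: "Y*p*X = p'" using b(2) 1(4) by simp
      have e3: "Y*s*t*p' = Y*s*t" using t by (simp add: mult.assoc)
      have "Y*s*t = p'" using e1 e2 e3 1(4) by simp
      thus ?thesis by blast
    qed simp
  qed
qed



lemma odec_facts:
  assumes "odec (h::'a::ring_1) p q"
  shows "p*p = p" "q*q = q" "p*q = 0" "q*p = 0" "h = p + q"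
    "p*h = p" "h*p = p" "q*h = q" "h*q = q" "h*h = h"
  using assms unfolding odec_def by (auto simp: algebra_simps)

lemma simple_cancel:
  fixes h p q p' q' :: "'a::ring_1"
  assumes A: "odec h p q" and B: "odec h p' q'" and m: "minimal p" and i: "iso p p'"
  shows "iso q q'"
proof -
  note a = odec_facts[OF A] and b = odec_facts[OF B]
  have m': "minimal p'" using min_iso[OF a(1) b(1) m i] .
  show ?thesis
  proof (cases "p'*q = p'")
    case False
    have pp: "p'*p \<noteq> 0"
    proof
      assume "p'*p = 0"
      hence "p' = p'*q" using b(6) a(5) by (simp add: algebra_simps)
      thus False using False by simp
    qed
    have "p'*p*p = p'*p" using a(1) by (simp add: mult.assoc)
    then obtain s where s: "s*(p'*p) = p" using m pp unfolding minimal_def by blast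
    define u where "u = s*p'"
    have up: "u*p' = u" unfolding u_def using b(1) by (simp add: mult.assoc)
    have uh: "u*h = u" unfolding u_def using b(6) by (simp add: mult.assoc)
    have "p = u*p" using s unfolding u_def by (simp add: mult.assoc)
    also have "\<dots> = u*h - u*q" using a(5) by (simp add: algebra_simps)
    finally have pu: "p = u - u*q" using uh by simp
    define q2 where "q2 = q - u*q"
    have hq2: "h = u + q2" unfolding q2_def using a(5) pu by simp
    have q2q: "q2*q = q2" unfolding q2_def using a(2) by (simp add: algebra_simps mult.assoc)
    have Z: "\<And>t. t*p' = t \<Longrightarrow> t*q = t \<Longrightarrow> t = 0"
    proof (rule ccontr)
      fix t assume t: "t*p' = t" "t*q = t" "t \<noteq> 0"
      then obtain s' where "s'*t = p'" using m' unfolding minimal_def by blast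
      hence "p'*q = p'" using t(2) by (metis mult.assoc)
      thus False using False by simp
    qed
    have qu1: "q*u*q = q*u"
    proof -
      have "q = q*u + q*q2" using hq2 a(8) by (metis distrib_left)
      hence "q*u = q - q*q2" by (simp add: algebra_simps)
      also have "\<dots> = q - q*q2*q" using q2q by (simp add: mult.assoc)
      also have "\<dots> = (q - q*q2)*q" using a(2) by (simp add: algebra_simps)
      finally show ?thesis by (metis \<open>q * u = q - q * q2\<close>)
    qed
    have "q*u*p' = q*u" using up by (simp add: mult.assoc)
    hence qu: "q*u = 0" using Z qu1 by blast
    have qq2: "q*q2 = q" unfolding q2_def using a(2) qu by (simp add: algebra_simps mult.assoc[symmetric])
    define w where "w = q*p'*q2"
    have "w*q = w" unfolding w_def using q2q by (simp add: mult.assoc)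
    moreover have "w*p' = w"
    proof -
      have "w = q*p'*h - q*p'*u" unfolding w_def using hq2 by (simp add: algebra_simps)
      hence w1: "w = q*p' - q*p'*u" using b(6) by (simp add: mult.assoc)
      hence "w*p' = q*p'*p' - q*p'*u*p'" by (simp add: left_diff_distrib)
      also have "\<dots> = q*p' - q*p'*u" using b(1) up by (simp add: mult.assoc)
      finally show ?thesis using w1 by simp
    qed
    ultimately have w0: "w = 0" using Z by blast
    have qq': "q*q' = q - q*p'" using a(8) b(5) by (metis add_diff_cancel_left' distrib_left)
    have f1: "q*q'*q2 = q"
    proof -
      have "q*q'*q2 = (q - q*p')*q2" using qq' by simp
      hence "q*q'*q2 = q*q2 - q*p'*q2" by (simp add: left_diff_distrib)
      thus ?thesis using qq2 w0 w_def by simp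
    qed
    have uq': "u*q' = 0" using up b(3) by (metis mult.assoc mult_zero_right)
    have f2: "q'*q2*q' = q'"
    proof -
      have "q2 = h - u" using hq2 by simp
      hence "q'*q2*q' = q'*(h-u)*q'" by simp
      hence "q'*q2*q' = q'*h*q' - q'*u*q'" by (simp add: left_diff_distrib right_diff_distrib)
      thus ?thesis using b(8) b(2) uq' by (simp add: mult.assoc)
    qed
    show ?thesis unfolding iso_def
    proof (intro exI conjI)
      show "q*q' = q*(q*q')*q'" using a(2) b(2) by (metis mult.assoc)
      show "q'*q2 = q'*(q'*q2)*q" using b(2) q2q by (metis mult.assoc)
      show "q*q'*(q'*q2) = q" using f1 b(2) by (metis mult.assoc)
      show "q'*q2*(q*q') = q'" using f2 q2q by (metis mult.assoc)
    qed
  next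
    case True
    define pt where "pt = q*p'"
    have pt1: "pt*pt = pt" unfolding pt_def using True b(1) by (metis mult.assoc)
    have pt2: "pt*q = pt" unfolding pt_def using True by (metis mult.assoc)
    have pt3: "q*pt = pt" unfolding pt_def using a(2) by (metis mult.assoc)
    have pt4: "p'*pt = p'" unfolding pt_def using True b(1) by (metis mult.assoc)
    have pt5: "pt*p' = pt" unfolding pt_def using b(1) by (metis mult.assoc)
    define k where "k = q - pt"
    have k1: "k*k = k" unfolding k_def using a(2) pt1 pt2 pt3 by (simp add: algebra_simps)
    have k2: "pt*k = 0" unfolding k_def using pt1 pt2 by (simp add: algebra_simps)
    have k3: "k*pt = 0" unfolding k_def using pt1 pt3 by (simp add: algebra_simps)
    have ppt: "p*pt = 0" unfolding pt_def using a(3) by (metis mult.assoc mult_zero_left)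
    have p'p: "p'*p = 0" using True a(4) by (metis mult.assoc mult_zero_right)
    have ptp: "pt*p = 0" unfolding pt_def using p'p by (metis mult.assoc mult_zero_right)
    have pk: "p*k = 0" unfolding k_def using a(3) ppt by (simp add: algebra_simps)
    have kp: "k*p = 0" unfolding k_def using a(4) ptp by (simp add: algebra_simps)
    have i1: "iso p pt" using iso_trans[OF a(1) b(1) pt1 i iso_same[OF b(1) pt1 pt4 pt5]] .
    have i2: "iso (p+k) (pt+k)" using iso_add[OF a(1) pt1 k1 i1 pk kp k2 k3] .
    have qpk: "pt + k = q" unfolding k_def by simp
    have pk1: "(p+k)*(p+k) = p+k" using a(1) k1 pk kp by (simp add: algebra_simps)
    have od: "odec h pt (p+k)" unfolding odec_def
      using pt1 pk1 ptp k2 ppt k3 a(5) qpk by (simp add: algebra_simps)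
    have i3: "iso (p+k) q'" using iso_compl[OF od B pt5 pt4] .
    show ?thesis using iso_trans[OF a(2) pk1 b(2) iso_sym[OF i2[unfolded qpk]] i3] .
  qed
qed



lemma isoE:
  assumes "iso p p'"
  obtains X Y where "X = p*X*p'" "Y = p'*Y*p" "X*Y = p" "Y*X = p'"
  using assms unfolding iso_def by (elim exE conjE) (rule that)

lemma li_ann: "left_ideal {r::'a::ring_1. r*c = 0}"
  unfolding left_ideal_def by (simp add: algebra_simps mult.assoc)

lemma split_min:
  fixes p :: "'a::ring_1"
  assumes ss: "semisimple_ring TYPE('a)" and pp: "p*p = p" and p0: "p \<noteq> 0"
  shows "\<exists>p1 p2. odec p p1 p2 \<and> minimal p1"
proof -
  define F where "F = {K::'a set. left_ideal K \<and> (\<forall>x\<in>K. x*p = x) \<and> p \<notin> K}"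
  have "{0} \<in> F" unfolding F_def left_ideal_def using p0 by auto
  then obtain K where K: "K \<in> F" and Kmax: "\<And>K'. (K', K) \<in> accrel \<Longrightarrow> K' \<notin> F"
    using wfE_min[OF wf_accrel[OF ss]] by metis
  have KI: "left_ideal K" "\<And>x. x \<in> K \<Longrightarrow> x*p = x" "p \<notin> K" using K unfolding F_def by auto
  obtain k where k: "k \<in> K" "\<And>x. x\<in>K \<Longrightarrow> x*k = x" using li_idem[OF ss KI(1)] by blast
  have kp: "k*p = k" using KI(2) k(1) .
  have kk: "k*k = k" using k by blast
  define k' where "k' = p*k"
  define p1 where "p1 = p - k'"
  have k'k': "k'*k' = k'"
  proof -
    have "k'*k' = p*(k*p)*k" unfolding k'_def by (simp add: mult.assoc)
    thus ?thesis using kp kk unfolding k'_def by (simp add: mult.assoc)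
  qed
  have pp': "\<And>z. p*(p*z) = p*z" using pp by (metis mult.assoc)
  have kp': "\<And>z. k*(p*z) = k*z" using kp by (metis mult.assoc)
  have kk': "\<And>z. k*(k*z) = k*z" using kk by (metis mult.assoc)
  have p1p1: "p1*p1 = p1" unfolding p1_def k'_def
    by (simp add: algebra_simps pp kp kk pp' kp' kk')
  have p1k': "p1*k' = 0" unfolding p1_def k'_def
    by (simp add: algebra_simps pp kp kk pp' kp' kk')
  have k'p1: "k'*p1 = 0" unfolding p1_def k'_def
    by (simp add: algebra_simps pp kp kk pp' kp' kk')
  have od: "odec p p1 k'" unfolding odec_def using p1p1 k'k' p1k' k'p1 p1_def by simp
  have p1p: "p1*p = p1" using od unfolding odec_def by (simp add: algebra_simps)
  have p1k: "p1*k = 0" unfolding p1_def k'_def using kk by (simp add: algebra_simps mult.assoc)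
  have kp1: "k*p1 = 0" unfolding p1_def k'_def by (simp add: algebra_simps kp kk kp' kk')
  have p1nz: "p1 \<noteq> 0"
  proof
    assume "p1 = 0"
    hence "p = p*k" unfolding p1_def k'_def by simp
    thus False using li_mult[OF KI(1) k(1), of p] KI(3) by simp
  qed
  have "minimal p1" unfolding minimal_def
  proof (intro conjI allI impI p1nz)
    fix t assume t: "t*p1 = t"
    show "t = 0 \<or> (\<exists>s. s*t = p1)"
    proof (cases "t = 0")
      case True
      thus ?thesis by simp
    next
      case False
      hence tnz: "t \<noteq> 0" .
      define K' where "K' = {m*k + s*t | m s. True}"
      have tp: "t*p = t" using t p1p by (metis mult.assoc)
      have LK': "left_ideal K'" unfolding left_ideal_def K'_def
      proof (intro conjI ballI allI impI)
        show "0 \<in> {m*k + s*t | m s. True}" by (rule CollectI, rule exI[of _ 0], rule exI[of _ 0]) simp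
      next
        fix x y assume "x \<in> {m*k + s*t | m s. True}" "y \<in> {m*k + s*t | m s. True}"
        then obtain m1 s1 m2 s2 where "x = m1*k + s1*t" "y = m2*k + s2*t" by blast
        hence "x + y = (m1+m2)*k + (s1+s2)*t" by (simp add: algebra_simps)
        thus "x + y \<in> {m*k + s*t | m s. True}" by blast
      next
        fix r x assume "x \<in> {m*k + s*t | m s. True}"
        then obtain m1 s1 where "x = m1*k + s1*t" by blast
        hence "r*x = (r*m1)*k + (r*s1)*t" by (simp add: algebra_simps mult.assoc)
        thus "r*x \<in> {m*k + s*t | m s. True}" by blast
      qed
      have K'p: "\<forall>x\<in>K'. x*p = x" unfolding K'_def using kp tp by (auto simp: algebra_simps mult.assoc)
      have tK': "t \<in> K'" unfolding K'_def by (rule CollectI, rule exI[of _ 0], rule exI[of _ 1]) simp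
      have tK: "t \<notin> K"
      proof
        assume "t \<in> K"
        hence "t = t*k" using k(2) by simp
        also have "\<dots> = t*p1*k" using t by simp
        also have "\<dots> = 0" using p1k by (simp add: mult.assoc)
        finally show False using tnz by simp
      qed
      have KK': "K \<subseteq> K'" unfolding K'_def
      proof
        fix x assume "x \<in> K"
        hence "x = x*k + 0*t" using k(2) by simp
        thus "x \<in> {m*k + s*t | m s. True}" by blast
      qed
      have "(K', K) \<in> accrel" unfolding accrel_def using KK' tK' tK LK' KI(1) by auto
      hence "K' \<notin> F" using Kmax by blast
      hence "p \<in> K'" using LK' K'p unfolding F_def by blast
      then obtain m s where ms: "p = m*k + s*t" unfolding K'_def by blast
      have "p1 = p*p1" using od unfolding odec_def by (simp add: algebra_simps)
      also have "\<dots> = m*(k*p1) + s*(t*p1)" using ms by (simp add: algebra_simps mult.assoc)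
      also have "\<dots> = s*t" using kp1 t by simp
      finally have "p1 = s*t" .
      thus ?thesis by blast
    qed
  qed
  thus ?thesis using od by blast
qed

lemma transport:
  fixes p p' X Y a b :: "'a::ring_1"
  assumes X: "X = p*X*p'" and Y: "Y = p'*Y*p" and XY: "X*Y = p" and YX: "Y*X = p'" and od: "odec p a b"
  shows "odec p' (Y*a*X) (Y*b*X)" "iso a (Y*a*X)" "iso b (Y*b*X)"
proof -
  note o = odec_facts[OF od]
  have Yp: "Y*p = Y" using Y o(10) by (metis mult.assoc)
  have aXYa: "a*(X*Y)*a = a" "b*(X*Y)*b = b" "a*(X*Y)*b = 0" "b*(X*Y)*a = 0" using XY o by simp_all
  show "odec p' (Y*a*X) (Y*b*X)" unfolding odec_def
  proof (intro conjI)
    show "Y*a*X*(Y*a*X) = Y*a*X" using aXYa(1) by (metis mult.assoc)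
    show "Y*b*X*(Y*b*X) = Y*b*X" using aXYa(2) by (metis mult.assoc)
    show "Y*a*X*(Y*b*X) = 0" using aXYa(3) by (metis mult.assoc mult_zero_left mult_zero_right)
    show "Y*b*X*(Y*a*X) = 0" using aXYa(4) by (metis mult.assoc mult_zero_left mult_zero_right)
    have "Y*a*X + Y*b*X = Y*p*X" using o(5) by (simp add: algebra_simps)
    thus "p' = Y*a*X + Y*b*X" using Yp YX by simp
  qed
  show "iso a (Y*a*X)" unfolding iso_def
  proof (intro exI conjI)
    show "a*X = a*(a*X)*(Y*a*X)" using aXYa(1) o(1) by (metis mult.assoc)
    show "Y*a = Y*a*X*(Y*a)*a" using aXYa(1) o(1) by (metis mult.assoc)
    show "a*X*(Y*a) = a" using aXYa(1) by (metis mult.assoc)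
    show "Y*a*(a*X) = Y*a*X" using o(1) by (metis mult.assoc)
  qed
  show "iso b (Y*b*X)" unfolding iso_def
  proof (intro exI conjI)
    show "b*X = b*(b*X)*(Y*b*X)" using aXYa(2) o(2) by (metis mult.assoc)
    show "Y*b = Y*b*X*(Y*b)*b" using aXYa(2) o(2) by (metis mult.assoc)
    show "b*X*(Y*b) = b" using aXYa(2) by (metis mult.assoc)
    show "Y*b*(b*X) = Y*b*X" using o(2) by (metis mult.assoc)
  qed
qed

lemma odec_assoc:
  fixes h p q p1 p2 :: "'a::ring_1"
  assumes A: "odec h p q" and B: "odec p p1 p2"
  shows "odec h p1 (p2+q)" "odec (p2+q) p2 q"
proof -
  note a = odec_facts[OF A] and b = odec_facts[OF B]
  have p1q: "p1*q = 0" using b(6) a(3) by (metis mult.assoc mult_zero_right)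
  have qp1: "q*p1 = 0" using b(7) a(4) by (metis mult.assoc mult_zero_left)
  have p2q: "p2*q = 0" using b(8) a(3) by (metis mult.assoc mult_zero_right)
  have qp2: "q*p2 = 0" using b(9) a(4) by (metis mult.assoc mult_zero_left)
  show "odec h p1 (p2+q)" unfolding odec_def using a b p1q qp1 p2q qp2
    by (simp add: algebra_simps)
  show "odec (p2+q) p2 q" unfolding odec_def using a b p2q qp2 by simp
qed

lemma cancel_main:
  fixes h :: "'a::ring_1"
  assumes ss: "semisimple_ring TYPE('a)"
  shows "odec h p q \<Longrightarrow> odec h p' q' \<Longrightarrow> iso p p' \<Longrightarrow> iso q q'"
proof -
  define P where "P = (\<lambda>A::'a set. \<forall>h p q p' q'. A = {r. r*h = 0} \<longrightarrow> odec h p q \<longrightarrow> odec h p' q' \<longrightarrow> iso p p' \<longrightarrow> iso q q')"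
  have "P A" for A
  proof (induction A rule: wf_induct[OF wf_accrel[OF ss]])
    case (1 A)
    show ?case unfolding P_def
    proof (intro allI impI)
      fix h p q p' q' :: 'a
      assume Ah: "A = {r. r*h = 0}" and A: "odec h p q" and B: "odec h p' q'" and i: "iso p p'"
      note a = odec_facts[OF A] and b = odec_facts[OF B]
      show "iso q q'"
      proof (cases "p = 0")
        case True
        hence "p' = 0" using i iso_zero by blast
        hence "q = h" "q' = h" using a(5) b(5) True by simp_all
        thus ?thesis using iso_refl[OF a(10)] by simp
      next
        case False
        obtain p1 p2 where sp: "odec p p1 p2" "minimal p1" using split_min[OF ss a(1) False] by blast
        obtain X Y where XY: "X = p*X*p'" "Y = p'*Y*p" "X*Y = p" "Y*X = p'" by (rule isoE[OF i])
        note tr = transport[OF XY sp(1)]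
        note sp' = odec_facts[OF sp(1)]
        note tr' = odec_facts[OF tr(1)]
        have o1: "odec h p1 (p2+q)" "odec (p2+q) p2 q" using odec_assoc[OF A sp(1)] by auto
        have o2: "odec h (Y*p1*X) (Y*p2*X+q')" "odec (Y*p2*X+q') (Y*p2*X) q'" using odec_assoc[OF B tr(1)] by auto
        have "iso (p2+q) (Y*p2*X+q')" using simple_cancel[OF o1(1) o2(1) sp(2) tr(2)] .
        then obtain X2 Y2 where XY2: "X2 = (p2+q)*X2*(Y*p2*X+q')" "Y2 = (Y*p2*X+q')*Y2*(p2+q)"
            "X2*Y2 = p2+q" "Y2*X2 = Y*p2*X+q'" by (rule isoE)
        note tb = transport[OF XY2(2) XY2(1) XY2(4) XY2(3) o2(2)]
        note tb' = odec_facts[OF tb(1)]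
        have ip2: "iso p2 (X2*(Y*p2*X)*Y2)"
          using iso_trans[OF sp'(2) tr'(2) tb'(1) tr(3) tb(2)] .
        define B where "B = {r::'a. r*(p2+q) = 0}"
        have hg: "h*(p2+q) = p2+q" using odec_facts[OF o1(1)] by simp
        have "(B, A) \<in> accrel" unfolding accrel_def
        proof (clarsimp, intro conjI)
          show "A \<subset> B"
          proof
            show "A \<subseteq> B" unfolding Ah B_def using hg by (auto, metis mult.assoc mult_zero_left)
            have "p1 \<in> B" unfolding B_def using odec_facts[OF o1(1)] by simp
            moreover have "p1 \<notin> A" unfolding Ah using odec_facts[OF o1(1)] sp(2) unfolding minimal_def by simp
            ultimately show "A \<noteq> B" by blast
          qed
          show "left_ideal A" unfolding Ah by (rule li_ann)
          show "left_ideal B" unfolding B_def by (rule li_ann)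
        qed
        hence "P B" using 1 by blast
        hence "iso q (X2*q'*Y2)" unfolding P_def B_def using o1(2) tb(1) ip2 by blast
        thus ?thesis using iso_trans[OF a(2) tb'(2) b(2) _ iso_sym[OF tb(3)]] by blast
      qed
    qed
  qed
  thus "odec h p q \<Longrightarrow> odec h p' q' \<Longrightarrow> iso p p' \<Longrightarrow> iso q q'" unfolding P_def by blast
qed



lemma mext: "(a::'a::ring_1)*b = c \<Longrightarrow> a*(b*z) = c*z"
  by (metis mult.assoc)

lemma regular:
  fixes a :: "'a::ring_1"
  assumes ss: "semisimple_ring TYPE('a)"
  shows "\<exists>x. a*x*a = a"
proof -
  define I where "I = {r*a | r. True}"
  have LI: "left_ideal I" unfolding left_ideal_def I_def
  proof (intro conjI ballI allI impI)
    show "0 \<in> {r*a | r. True}" by (rule CollectI, rule exI[of _ 0]) simp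
  next
    fix u w assume "u \<in> {r*a | r. True}" "w \<in> {r*a | r. True}"
    then obtain r1 r2 where "u = r1*a" "w = r2*a" by blast
    hence "u + w = (r1+r2)*a" by (simp add: distrib_right)
    thus "u + w \<in> {r*a | r. True}" by blast
  next
    fix s u assume "u \<in> {r*a | r. True}"
    then obtain r1 where "u = r1*a" by blast
    hence "s*u = (s*r1)*a" by (simp add: mult.assoc)
    thus "s*u \<in> {r*a | r. True}" by blast
  qed
  obtain e where e: "e \<in> I" "\<And>z. z \<in> I \<Longrightarrow> z*e = z" using li_idem[OF ss LI] by blast
  obtain t where t: "e = t*a" using e(1) unfolding I_def by blast
  have "a \<in> I" unfolding I_def by (rule CollectI, rule exI[of _ 1]) simp
  hence "a*e = a" using e(2) by blast
  hence "a*t*a = a" using t by (simp add: mult.assoc)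
  thus ?thesis by blast
qed

lemma colop:
  fixes a b c d t :: "'a::ring_1"
  assumes "in_GL2 a b c d"
  shows "in_GL2 a (b + a*t) c (d + c*t)"
proof -
  obtain e f g h where E: "a*e + b*g = 1" "a*f + b*h = 0" "c*e + d*g = 0" "c*f + d*h = 1"
      "e*a + f*c = 1" "e*b + f*d = 0" "g*a + h*c = 0" "g*b + h*d = 1"
    using assms unfolding in_GL2_def by (elim exE conjE) (rule that)
  show ?thesis unfolding in_GL2_def
  proof (intro exI conjI)
    have "a*(e - t*g) + (b + a*t)*g = a*e + b*g" by (simp add: algebra_simps)
    thus "a*(e - t*g) + (b + a*t)*g = 1" using E(1) by simp
    have "a*(f - t*h) + (b + a*t)*h = a*f + b*h" by (simp add: algebra_simps)
    thus "a*(f - t*h) + (b + a*t)*h = 0" using E(2) by simp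
    have "c*(e - t*g) + (d + c*t)*g = c*e + d*g" by (simp add: algebra_simps)
    thus "c*(e - t*g) + (d + c*t)*g = 0" using E(3) by simp
    have "c*(f - t*h) + (d + c*t)*h = c*f + d*h" by (simp add: algebra_simps)
    thus "c*(f - t*h) + (d + c*t)*h = 1" using E(4) by simp
    have "(e - t*g)*a + (f - t*h)*c = (e*a + f*c) - t*(g*a + h*c)" by (simp add: algebra_simps)
    thus "(e - t*g)*a + (f - t*h)*c = 1" using E(5) E(7) by simp
    have "(e - t*g)*(b + a*t) + (f - t*h)*(d + c*t) =
        (e*b + f*d) + (e*a + f*c)*t - t*(g*b + h*d) - t*(g*a + h*c)*t" by (simp add: algebra_simps)
    thus "(e - t*g)*(b + a*t) + (f - t*h)*(d + c*t) = 0" using E(5-8) by simp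
    show "g*a + h*c = 0" using E(7) .
    have "g*(b + a*t) + h*(d + c*t) = (g*b + h*d) + (g*a + h*c)*t" by (simp add: algebra_simps)
    thus "g*(b + a*t) + h*(d + c*t) = 1" using E(7,8) by simp
  qed
qed

lemma free_admissible:
  fixes a b :: "'a::ring_1"
  assumes ss: "semisimple_ring TYPE('a)" and fr: "cyclic_free a b"
  shows "admissible a b"
proof -
  obtain x where ax: "a*x*a = a" using regular[OF ss] by blast
  define E where "E = a*x"
  define F where "F = x*a"
  define G where "G = 1 - E"
  define H where "H = 1 - F"
  have axE: "a*x = E" unfolding E_def ..
  have xaF: "x*a = F" unfolding F_def ..
  have axa: "a*(x*a) = a" using ax by (simp add: mult.assoc)
  have axaz: "\<And>z. a*(x*(a*z)) = a*z" using ax by (metis mult.assoc)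
  have EE: "E*E = E" unfolding E_def using ax by (simp add: mult.assoc[symmetric])
  have FF: "F*F = F" unfolding F_def using axa by (simp add: mult.assoc axaz)
  have Ea: "E*a = a" unfolding E_def using ax .
  have aF: "a*F = a" unfolding F_def using axa .
  have GG: "G*G = G" unfolding G_def using EE by (simp add: algebra_simps)
  have HH: "H*H = H" unfolding H_def using FF by (simp add: algebra_simps)
  have EG: "E*G = 0" "G*E = 0" unfolding G_def using EE by (simp_all add: algebra_simps)
  have FH: "F*H = 0" "H*F = 0" unfolding H_def using FF by (simp_all add: algebra_simps)
  have Ga: "G*a = 0" unfolding G_def using Ea by (simp add: algebra_simps)
  have aH: "a*H = 0" unfolding H_def using aF by (simp add: algebra_simps)
  have EGs: "E + G = 1" "F + H = 1" unfolding G_def H_def by simp_all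
  define b' where "b' = G*b"
  obtain y where yb: "b'*y*b' = b'" using regular[OF ss] by blast
  define F' where "F' = y*b'"
  define H' where "H' = 1 - F'"
  have ybF: "y*b' = F'" unfolding F'_def ..
  have bF: "b'*F' = b'" unfolding F'_def using yb by (simp add: mult.assoc)
  have F'F': "F'*F' = F'" unfolding F'_def using bF[unfolded F'_def] by (simp add: mult.assoc)
  have H'H': "H'*H' = H'" unfolding H'_def using F'F' by (simp add: algebra_simps)
  have H'F': "H'*F' = 0" unfolding H'_def using F'F' by (simp add: algebra_simps)
  have bH': "b'*H' = 0" unfolding H'_def using bF by (simp add: algebra_simps)
  have F'H's: "F' + H' = 1" unfolding H'_def by simp
  have Gb: "G*b' = b'" unfolding b'_def using GG by (simp add: mult.assoc[symmetric])
  have Eb: "E*b' = 0" unfolding b'_def using EG(1) by (simp add: mult.assoc[symmetric])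
  have ann: "\<And>r. r*b' = 0 \<Longrightarrow> r*G = 0"
  proof -
    fix r assume rb: "r*b' = 0"
    have "r*G*a = 0" using Ga by (simp add: mult.assoc)
    moreover have "r*G*b = 0" using rb unfolding b'_def by (simp add: mult.assoc)
    ultimately show "r*G = 0" using fr unfolding cyclic_free_def by blast
  qed
  have K1: "b'*(y*G) = G"
  proof -
    define r where "r = G - b'*(y*G)"
    have "r*b' = G*b' - b'*(y*(G*b'))" unfolding r_def by (simp add: algebra_simps mult.assoc)
    also have "\<dots> = 0" using Gb ybF bF by simp
    finally have "r*G = 0" using ann by blast
    moreover have "r*G = r" unfolding r_def using GG by (simp add: algebra_simps mult.assoc)
    ultimately show ?thesis unfolding r_def by simp
  qed
  have K1z: "\<And>z. b'*(y*(G*z)) = G*z" using K1 by (metis mult.assoc)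
  have bFz: "\<And>z. b'*(F'*z) = b'*z" using bF by (metis mult.assoc)
  have o1: "odec 1 E G" unfolding odec_def using EE GG EG EGs by simp
  have o2: "odec 1 F H" unfolding odec_def using FF HH FH EGs by simp
  have iEF: "iso E F" unfolding iso_def
  proof (intro exI conjI)
    show "a = E*a*F" using Ea aF by simp
    show "x*a*x = F*(x*a*x)*E" unfolding E_def F_def using axa by (simp add: mult.assoc axaz)
    show "a*(x*a*x) = E" unfolding E_def using axa by (simp add: mult.assoc axaz)
    show "x*a*x*a = F" unfolding F_def using axa by (simp add: mult.assoc axaz)
  qed
  have iGH: "iso G H" using cancel_main[OF ss o1 o2 iEF] .
  obtain u v where uv: "u = G*u*H" "v = H*v*G" "u*v = G" "v*u = H" using iGH by (rule isoE)
  have uc: "G*u = u" "u*H = u" using corner[OF uv(1) GG HH] by auto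
  have vc: "H*v = v" "v*G = v" using corner[OF uv(2) HH GG] by auto
  have uxE: "u*(x*E) = 0"
  proof -
    have "H*(x*E) = 0" unfolding H_def E_def F_def by (simp add: algebra_simps mult.assoc axaz)
    hence "u*H*(x*E) = 0" by (simp add: mult.assoc)
    thus ?thesis using uc(2) by simp
  qed
  have H'yG: "H'*(y*G) = 0"
  proof -
    have "H'*(y*G) = y*G - y*(b'*(y*G))" unfolding H'_def F'_def by (simp add: algebra_simps mult.assoc)
    thus ?thesis using K1 by simp
  qed
  define c0 where "c0 = v*b'"
  define d0 where "d0 = F'*(y*(G*u))"
  have "in_GL2 a b' d0 H'" unfolding in_GL2_def
  proof (intro exI conjI)
    show "a*(x*E) + b'*(y*G) = 1" using K1 axE[THEN mext] EE EGs by (simp add: mult.assoc[symmetric])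
    show "a*(H*c0) + b'*H' = 0" using aH bH' by (simp add: mult.assoc[symmetric])
    show "d0*(x*E) + H'*(y*G) = 0" unfolding d0_def using uxE H'yG by (simp add: mult.assoc)
    have "d0*(H*c0) = F'*(y*(G*((u*H)*(v*b'))))" unfolding d0_def c0_def by (simp add: mult.assoc)
    also have "\<dots> = F'*(y*((G*G)*b'))" using uc(2) uv(3) by (simp add: mult.assoc[symmetric])
    also have "\<dots> = F'" using GG Gb ybF F'F' by simp
    finally show "d0*(H*c0) + H'*H' = 1" using H'H' F'H's by simp
    have "H*c0*d0 = H*(v*((b'*F')*(y*(G*u))))" unfolding d0_def c0_def by (simp add: mult.assoc)
    also have "\<dots> = H*((v*G)*u)" using bFz K1z by (simp add: mult.assoc)
    also have "\<dots> = H" using vc(2) uv(4) HH by simp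
    finally have "H*c0*d0 = H" .
    moreover have "x*E*a = F" using Ea xaF by (simp add: mult.assoc)
    ultimately show "x*E*a + H*c0*d0 = 1" using EGs by simp
    have "x*E*b' = 0" using Eb by (simp add: mult.assoc)
    moreover have "H*c0*H' = 0" unfolding c0_def using bH' by (simp add: mult.assoc)
    ultimately show "x*E*b' + H*c0*H' = 0" by simp
    have "y*G*a = 0" using Ga by (simp add: mult.assoc)
    moreover have "H'*d0 = 0" unfolding d0_def using H'F' by (simp add: mult.assoc[symmetric])
    ultimately show "y*G*a + H'*d0 = 0" by simp
    have "y*G*b' = F'" using Gb ybF by (simp add: mult.assoc)
    thus "y*G*b' + H'*H' = 1" using H'H' F'H's by simp
  qed
  hence "in_GL2 a (b' + a*(x*b)) d0 (H' + d0*(x*b))" by (rule colop)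
  moreover have "b' + a*(x*b) = b" unfolding b'_def G_def E_def by (simp add: algebra_simps mult.assoc)
  ultimately show ?thesis unfolding admissible_def by metis
qed


theorem mainTheorem11:
  fixes a b :: "'a::ring_1"
  assumes "semisimple_ring TYPE('a)"
  shows "cyclic_free a b \<longleftrightarrow> admissible a b"
proof
  assume "cyclic_free a b"
  thus "admissible a b" using free_admissible[OF assms] by blast
next
  assume "admissible a b"
  then obtain c d where "in_GL2 a b c d" unfolding admissible_def by (elim exE)
  then obtain e g :: 'a where eg: "a*e + b*g = 1" unfolding in_GL2_def by (elim exE conjE)
  show "cyclic_free a b" unfolding cyclic_free_def
  proof (intro allI impI)
    fix r assume r: "r*a = 0 \<and> r*b = 0"
    have "r = r*(a*e + b*g)" using eg by simp
    also have "\<dots> = (r*a)*e + (r*b)*g" by (simp add: algebra_simps mult.assoc)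
    also have "\<dots> = 0" using r by simp
    finally show "r = 0" .
  qed
qed

end
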